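(* Let $(\Omega,\mathscr{B},\mu)$ be a probability space and $T:\Omega\to\Omega$ a measurable map preserving $\mu$, with $\mu$ ergodic. Let $U\subset\Omega$ be measurable with $\mu(U)>0$, and let $(U,\hat T,\hat\mu)$ be the induced system on $U$. Let $B_j\subset U$ ($j\in\mathbb{N}$) be measurable sets with $\mu(B_j)>0$ and $\mu(B_j)\to 0$ as $j\to\infty$. Suppose that either the limit $$F(t)=\lim_{j\to\infty}F_{B_j}(t)$$ exists for every $t>0$, or the limit $$\hat F(t)=\lim_{j\to\infty}\hat F_{B_j}(t)$$ exists for every $t>0$. Then both limits exist for every $t>0$ and $F(t)=\hat F(t)$ for all $t>0$.
   Context: For measurable $V\subset\Omega$ define $\tau_V(x)=\min\{j\ge1: T^jx\in V\}$ (with $\tau_V(x)=\infty$ if no such $j$ exists). For $U$ with $\mu(U)>0$, the induced map is $\hat T=T^{\tau_U}:U\to U$ (defined $\mu$-a.e. on $U$), and the induced measure is $\hat\mu(A)=\mu(A)/\mu(U)$ for measurable $A\subset U$; $\hat\mu$ is $\hat T$-invariant and ergodic. For $B\subset U$ with $\mu(B)>0$, let $\hat\tau_B(x)=\min\{j\ge1:\hat T^jx\in B\}$ for $x\in U$. The entry times distributions are, for $t>0$, $$F_B(t)=\mu\left(\left\{x\in\Omega:\tau_B(x)>\tfrac{t}{\mu(B)}\right\}\right),\qquad \hat F_B(t)=\hat\mu\left(\left\{x\in U:\hat\tau_B(x)>\tfrac{t}{\hat\mu(B)}\right\}\right).$$ *)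

theory Defs
  imports "HOL-Probability.Probability"
begin

definition mpreserving :: "'a measure \<Rightarrow> ('a \<Rightarrow> 'a) \<Rightarrow> bool" where
  "mpreserving M T \<longleftrightarrow> T \<in> measurable M M \<and>
     (\<forall>A \<in> sets M. measure M (T -` A \<inter> space M) = measure M A)"

definition ergodic_map :: "'a measure \<Rightarrow> ('a \<Rightarrow> 'a) \<Rightarrow> bool" where
  "ergodic_map M T \<longleftrightarrow>
     (\<forall>A \<in> sets M. T -` A \<inter> space M = A \<longrightarrow> measure M A = 0 \<or> measure M A = 1)"

definition entry_time :: "('a \<Rightarrow> 'a) \<Rightarrow> 'a set \<Rightarrow> 'a \<Rightarrow> enat" where
  "entry_time T V x =
     (if \<exists>j\<ge>1. (T ^^ j) x \<in> V then enat (LEAST j. j \<ge> 1 \<and> (T ^^ j) x \<in> V) else \<infinity>)"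

text \<open>Induced (first return) map T^{tau_U} on U; where tau_U is infinite (a null set)
  we arbitrarily let it be the identity.\<close>
definition induced_map :: "('a \<Rightarrow> 'a) \<Rightarrow> 'a set \<Rightarrow> 'a \<Rightarrow> 'a" where
  "induced_map T U x = (case entry_time T U x of enat n \<Rightarrow> (T ^^ n) x | \<infinity> \<Rightarrow> x)"

definition entry_dist :: "'a measure \<Rightarrow> ('a \<Rightarrow> 'a) \<Rightarrow> 'a set \<Rightarrow> real \<Rightarrow> real" where
  "entry_dist M T B t =
     measure M {x \<in> space M. ereal_of_enat (entry_time T B x) > ereal (t / measure M B)}"

definition induced_measure :: "'a measure \<Rightarrow> 'a set \<Rightarrow> 'a set \<Rightarrow> real" where
  "induced_measure M U A = measure M A / measure M U"

definition induced_entry_dist ::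
  "'a measure \<Rightarrow> ('a \<Rightarrow> 'a) \<Rightarrow> 'a set \<Rightarrow> 'a set \<Rightarrow> real \<Rightarrow> real" where
  "induced_entry_dist M T U B t =
     induced_measure M U {x \<in> U \<inter> space M.
        ereal_of_enat (entry_time (induced_map T U) B x) > ereal (t / induced_measure M U B)}"

end

theory Submission imports Defs begin


lemma sum_split_nat: "(\<Sum>i<L+R. f i) = (\<Sum>i<L. f i) + (\<Sum>i<R. f (L+i))" for f :: "nat \<Rightarrow> real"
  by (induction R) (auto simp: ac_simps)

lemma block:
  fixes a :: "nat \<Rightarrow> real" and e :: "nat \<Rightarrow> bool" and \<beta> :: real
  assumes a0: "\<And>i. 0 \<le> a i" and b0: "0 \<le> \<beta>"
   and H: "\<And>i. \<not> e i \<Longrightarrow> \<exists>L. 1 \<le> L \<and> L \<le> N \<and> \<beta> * real L < (\<Sum>j<L. a (i+j))"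
  shows "\<beta> * (real K - real N - (\<Sum>i<K. if e (s+i) then 1 else 0)) \<le> (\<Sum>i<K. a (s+i))"
proof (induction K arbitrary: s rule: less_induct)
  case (less K)
  let ?bad = "\<lambda>s K. (\<Sum>i<K. if e (s+i) then 1 else (0::real))"
  have nn: "\<And>s K. 0 \<le> (\<Sum>i<K. a (s+i))" using a0 by (simp add: sum_nonneg)
  show ?case
  proof (cases "K = 0")
    case True then show ?thesis using b0 by simp
  next
    case False
    then obtain K' where K: "K = Suc K'" by (cases K) auto
    show ?thesis
    proof (cases "e s")
      case True
      have ih: "\<beta> * (real K' - real N - ?bad (Suc s) K') \<le> (\<Sum>i<K'. a (Suc s+i))" using less(1)[of K' "Suc s"] K by simp
      have e1: "(\<Sum>i<K. a (s+i)) = a s + (\<Sum>i<K'. a (Suc s+i))" unfolding K by (subst sum.lessThan_Suc_shift) simp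
      have e2: "?bad s K = 1 + ?bad (Suc s) K'" unfolding K using True by (subst sum.lessThan_Suc_shift) simp
      show ?thesis using ih e1 e2 a0[of s] K b0 by (simp add: algebra_simps)
    next
      case False
      obtain L where L: "1 \<le> L" "L \<le> N" "\<beta> * real L < (\<Sum>j<L. a (s+j))" using H[OF False] by auto
      show ?thesis
      proof (cases "L \<le> K")
        case True
        have ih: "\<beta> * (real (K-L) - real N - ?bad (s+L) (K-L)) \<le> (\<Sum>i<K-L. a (s+L+i))" using less(1)[of "K-L" "s+L"] L True by simp
        have e1: "(\<Sum>i<K. a (s+i)) = (\<Sum>i<L. a (s+i)) + (\<Sum>i<K-L. a (s+L+i))"
          using sum_split_nat[of "\<lambda>i. a (s+i)" L "K-L"] True by (simp add: add.assoc)
        have e2: "?bad s K = ?bad s L + ?bad (s+L) (K-L)"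
          using sum_split_nat[of "\<lambda>i. if e (s+i) then 1 else (0::real)" L "K-L"] True by (simp add: add.assoc)
        have e3: "0 \<le> ?bad s L" by (simp add: sum_nonneg)
        have "\<beta> * (real K - real N - ?bad s K) = \<beta> * real L + \<beta> * (real (K-L) - real N - ?bad (s+L) (K-L)) - \<beta> * ?bad s L"
          unfolding e2 using True by (simp add: algebra_simps of_nat_diff)
        also have "\<dots> \<le> \<beta> * real L + \<beta> * (real (K-L) - real N - ?bad (s+L) (K-L))" using b0 e3 by simp
        also have "\<dots> \<le> (\<Sum>i<L. a (s+i)) + (\<Sum>i<K-L. a (s+L+i))" using ih L(3) by linarith
        finally show ?thesis using e1 by simp
      next
        case False
        have "0 \<le> ?bad s K" by (simp add: sum_nonneg)
        then have "real K - real N - ?bad s K \<le> 0" using False L by linarith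
        then have "\<beta> * (real K - real N - ?bad s K) \<le> 0" using b0 by (simp add: mult_nonneg_nonpos)
        then show ?thesis using nn[of s K] by linarith
      qed
    qed
  qed
qed

lemma nat_floor_bounds: "0 \<le> (x::real) \<Longrightarrow> real (nat \<lfloor>x\<rfloor>) \<le> x \<and> x - 1 \<le> real (nat \<lfloor>x\<rfloor>)"
proof -
  assume x: "0 \<le> x"
  then have "real (nat \<lfloor>x\<rfloor>) = of_int \<lfloor>x\<rfloor>" by simp
  then show ?thesis using floor_correct[of x] by linarith
qed

lemma nat_ceil_bounds: "0 \<le> (x::real) \<Longrightarrow> x \<le> real (nat \<lceil>x\<rceil>) \<and> real (nat \<lceil>x\<rceil>) \<le> x + 1"
proof -
  assume x: "0 \<le> x"
  then have "real (nat \<lceil>x\<rceil>) = of_int \<lceil>x\<rceil>" by simp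
  then show ?thesis using ceiling_correct[of x] by linarith
qed

lemma et_gt:
  assumes s: "0 \<le> s"
  shows "(ereal s < ereal_of_enat (entry_time f V x)) \<longleftrightarrow> (\<forall>j. 1 \<le> j \<and> j \<le> nat \<lfloor>s\<rfloor> \<longrightarrow> (f^^j) x \<notin> V)"
proof (cases "\<exists>j\<ge>1. (f^^j) x \<in> V")
  case False
  then show ?thesis unfolding entry_time_def by auto
next
  case True
  define r where "r = (LEAST j. j \<ge> 1 \<and> (f^^j) x \<in> V)"
  have ex': "\<exists>j. j \<ge> 1 \<and> (f^^j) x \<in> V" using True by auto
  have r1: "r \<ge> 1" "(f^^r) x \<in> V" using LeastI_ex[OF ex'] unfolding r_def by auto
  have rmin: "\<And>j. j < r \<Longrightarrow> 1 \<le> j \<Longrightarrow> (f^^j) x \<notin> V" using not_less_Least unfolding r_def by blast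
  have et: "entry_time f V x = enat r" unfolding entry_time_def r_def using True by simp
  have fl: "0 \<le> \<lfloor>s\<rfloor>" using s by simp
  have "(ereal s < ereal_of_enat (entry_time f V x)) \<longleftrightarrow> s < real r" unfolding et by simp
  also have "\<dots> \<longleftrightarrow> \<lfloor>s\<rfloor> < int r" by (simp add: floor_less_iff)
  also have "\<dots> \<longleftrightarrow> nat \<lfloor>s\<rfloor> < r" using fl by linarith
  also have "\<dots> \<longleftrightarrow> (\<forall>j. 1 \<le> j \<and> j \<le> nat \<lfloor>s\<rfloor> \<longrightarrow> (f^^j) x \<notin> V)"
  proof
    assume "nat \<lfloor>s\<rfloor> < r"
    then show "\<forall>j. 1 \<le> j \<and> j \<le> nat \<lfloor>s\<rfloor> \<longrightarrow> (f^^j) x \<notin> V" using rmin by auto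
  next
    assume h: "\<forall>j. 1 \<le> j \<and> j \<le> nat \<lfloor>s\<rfloor> \<longrightarrow> (f^^j) x \<notin> V"
    show "nat \<lfloor>s\<rfloor> < r"
    proof (rule ccontr)
      assume "\<not> nat \<lfloor>s\<rfloor> < r"
      then show False using h r1 by auto
    qed
  qed
  finally show ?thesis .
qed

lemma conv_pair:
  fixes f g :: "nat \<Rightarrow> real"
  assumes d: "(\<lambda>j. g j - f j) \<longlonglongrightarrow> 0" and c: "convergent f \<or> convergent g"
  shows "convergent f \<and> convergent g \<and> lim f = lim g"
  using c
proof
  assume "convergent f"
  then have f: "f \<longlonglongrightarrow> lim f" by (simp add: convergent_LIMSEQ_iff)
  have "(\<lambda>j. f j + (g j - f j)) \<longlonglongrightarrow> lim f + 0" by (intro tendsto_add f d)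
  then have g: "g \<longlonglongrightarrow> lim f" by simp
  have cg: "convergent g" using g by (rule convergentI)
  have lg: "lim g = lim f" using g by (rule limI)
  show ?thesis using \<open>convergent f\<close> cg lg by simp
next
  assume "convergent g"
  then have g: "g \<longlonglongrightarrow> lim g" by (simp add: convergent_LIMSEQ_iff)
  have "(\<lambda>j. g j - (g j - f j)) \<longlonglongrightarrow> lim g - 0" by (intro tendsto_diff g d)
  then have f: "f \<longlonglongrightarrow> lim g" by simp
  have cf: "convergent f" using f by (rule convergentI)
  have lf: "lim f = lim g" using f by (rule limI)
  show ?thesis using \<open>convergent g\<close> cf lf by simp
qed

locale erg = prob_space M for M :: "'a measure" +
  fixes T :: "'a \<Rightarrow> 'a"
  assumes mp: "mpreserving M T" and ergo: "ergodic_map M T"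
begin

lemma T_meas[measurable]: "T \<in> measurable M M"
  using mp unfolding mpreserving_def by auto

lemma Tn_meas[measurable]: "(T^^n) \<in> measurable M M"
  by (induction n) (auto simp: funpow_Suc_right)

lemma Tn_space: "x \<in> space M \<Longrightarrow> (T^^n) x \<in> space M"
  using measurable_space[OF Tn_meas] by auto

lemma T_space: "x \<in> space M \<Longrightarrow> T x \<in> space M"
  using measurable_space[OF T_meas] by auto

lemma pres: "A \<in> sets M \<Longrightarrow> measure M {x\<in>space M. (T^^n) x \<in> A} = measure M A"
proof (induction n)
  case 0 then show ?case using sets.sets_into_space by (simp add: Int_absorb1 Collect_conj_eq Int_commute)
next
  case (Suc n)
  have m: "{x\<in>space M. (T^^n) x \<in> A} \<in> sets M" using Suc by measurable
  have "{x\<in>space M. (T^^Suc n) x \<in> A} = T -` {x\<in>space M. (T^^n) x \<in> A} \<inter> space M"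
    by (auto simp: funpow_swap1 T_space)
  moreover have "measure M (T -` {x\<in>space M. (T^^n) x \<in> A} \<inter> space M) = measure M {x\<in>space M. (T^^n) x \<in> A}"
    using mp m unfolding mpreserving_def by blast
  ultimately show ?case using Suc by simp
qed

lemma int_ind: "A \<in> sets M \<Longrightarrow> (\<integral>x. indicator A ((T^^n) x) \<partial>M) = measure M A"
proof -
  assume A: "A \<in> sets M"
  have "(\<integral>x. indicator A ((T^^n) x) \<partial>M) = (\<integral>x. indicator {x\<in>space M. (T^^n) x \<in> A} x \<partial>M)"
    by (rule Bochner_Integration.integral_cong[OF refl]) (auto simp: indicator_def)
  also have "\<dots> = measure M {x\<in>space M. (T^^n) x \<in> A}"
    by (simp add: Collect_conj_eq Int_commute inf_left_commute)
  finally show ?thesis using pres[OF A] by simp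
qed


lemma int_ind_int: "A \<in> sets M \<Longrightarrow> integrable M (\<lambda>x. indicator A ((T^^n) x) :: real)"
proof -
  assume [measurable]: "A \<in> sets M"
  show ?thesis by (rule integrable_const_bound[where B=1]) (auto simp: indicator_def)
qed

definition cnt :: "'a set \<Rightarrow> nat \<Rightarrow> 'a \<Rightarrow> real" where
  "cnt V L x = (\<Sum>i<L. indicator V ((T^^i) x))"

lemma cnt_meas[measurable]: assumes [measurable]: "V \<in> sets M" shows "(\<lambda>x. cnt V L x) \<in> borel_measurable M"
  unfolding cnt_def by measurable

lemma cnt_nonneg: "0 \<le> cnt V L x" unfolding cnt_def by (simp add: sum_nonneg)

lemma cnt_le: "cnt V L x \<le> real L"
proof -
  have "cnt V L x \<le> (\<Sum>i<L. (1::real))" unfolding cnt_def by (rule sum_mono) (simp add: indicator_def)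
  then show ?thesis by simp
qed

lemma cnt_Suc: "cnt V (Suc L) x = indicator V x + cnt V L (T x)"
  unfolding cnt_def by (subst sum.lessThan_Suc_shift) (simp add: funpow_swap1)

lemma cnt_shift: "cnt V L ((T^^i) x) = (\<Sum>j<L. indicator V ((T^^(i+j)) x))"
  unfolding cnt_def by (simp add: funpow_add add.commute)

lemma cnt_compl: "x \<in> space M \<Longrightarrow> cnt (space M - V) L x = real L - cnt V L x"
proof -
  assume x: "x \<in> space M"
  have "cnt (space M - V) L x = (\<Sum>i<L. 1 - indicator V ((T^^i) x))"
    unfolding cnt_def by (rule sum.cong) (auto simp: indicator_def Tn_space[OF x])
  then show ?thesis by (simp add: sum_subtractf cnt_def)
qed

lemma int_cnt: "V \<in> sets M \<Longrightarrow> (\<integral>x. cnt V L x \<partial>M) = real L * measure M V"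
proof -
  assume V: "V \<in> sets M"
  have "(\<integral>x. cnt V L x \<partial>M) = (\<Sum>i<L. \<integral>x. indicator V ((T^^i) x) \<partial>M)"
    unfolding cnt_def by (rule Bochner_Integration.integral_sum) (rule int_ind_int[OF V])
  then show ?thesis using int_ind[OF V] by simp
qed

lemma integrable_cnt: "V \<in> sets M \<Longrightarrow> integrable M (cnt V L)"
  unfolding cnt_def by (auto intro!: integrable_sum int_ind_int)

definition Sset :: "'a set \<Rightarrow> real \<Rightarrow> 'a set" where
  "Sset V a = {x\<in>space M. \<exists>q::nat. \<forall>n. \<exists>L\<ge>n. (a + 1/(real q+1)) * real L < cnt V L x}"

lemma Sset_meas: assumes [measurable]: "V \<in> sets M" shows "Sset V a \<in> sets M"
  unfolding Sset_def by measurable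

lemma Sset_inv:
  assumes a0: "0 \<le> a" and x: "x \<in> space M"
  shows "T x \<in> Sset V a \<longleftrightarrow> x \<in> Sset V a"
proof
  assume "T x \<in> Sset V a"
  then obtain q where hq: "\<And>n. \<exists>L\<ge>n. (a + 1/(real q+1)) * real L < cnt V L (T x)"
    unfolding Sset_def by auto
  define \<delta> where "\<delta> = 1/(real q+1)"
  have d0: "0 < \<delta>" unfolding \<delta>_def by simp
  have d2: "1/(real (2*q+1)+1) = \<delta>/2" unfolding \<delta>_def by (simp add: field_simps)
  define n0 where "n0 = nat \<lceil>2*(a+\<delta>/2+1)/\<delta>\<rceil>"
  have n0: "2*(a+\<delta>/2+1)/\<delta> \<le> real n0" unfolding n0_def by (rule real_nat_ceiling_ge)
  have "\<forall>n. \<exists>L\<ge>n. (a + 1/(real (2*q+1)+1)) * real L < cnt V L x"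
  proof
    fix n
    obtain L where L: "L \<ge> max n n0" "(a + \<delta>) * real L < cnt V L (T x)" using hq[of "max n n0"] unfolding \<delta>_def by auto
    have "real n0 \<le> real L" using L by simp
    then have "2*(a+\<delta>/2+1)/\<delta> \<le> real L" using n0 by linarith
    then have h: "a+\<delta>/2+1 \<le> real L * \<delta> / 2" using d0 by (simp add: field_simps)
    have "(a + \<delta>/2) * real (Suc L) = (a+\<delta>) * real L - real L * \<delta>/2 + (a + \<delta>/2)" by (simp add: algebra_simps)
    also have "\<dots> < cnt V L (T x)" using h L(2) by linarith
    also have "\<dots> \<le> cnt V (Suc L) x" unfolding cnt_Suc by simp
    finally have "(a + \<delta>/2) * real (Suc L) < cnt V (Suc L) x" .
    then show "\<exists>L\<ge>n. (a + 1/(real (2*q+1)+1)) * real L < cnt V L x"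
      unfolding d2 using L(1) by (intro exI[of _ "Suc L"]) auto
  qed
  then show "x \<in> Sset V a" unfolding Sset_def using x by blast
next
  assume "x \<in> Sset V a"
  then obtain q where hq: "\<And>n. \<exists>L\<ge>n. (a + 1/(real q+1)) * real L < cnt V L x"
    unfolding Sset_def by auto
  define \<delta> where "\<delta> = 1/(real q+1)"
  have d0: "0 < \<delta>" unfolding \<delta>_def by simp
  have d2: "1/(real (2*q+1)+1) = \<delta>/2" unfolding \<delta>_def by (simp add: field_simps)
  define n0 where "n0 = nat \<lceil>2*(a+\<delta>/2+1)/\<delta>\<rceil>"
  have n0: "2*(a+\<delta>/2+1)/\<delta> \<le> real n0" unfolding n0_def by (rule real_nat_ceiling_ge)
  have "\<forall>n. \<exists>L\<ge>n. (a + 1/(real (2*q+1)+1)) * real L < cnt V L (T x)"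
  proof
    fix n
    obtain L1 where L1: "L1 \<ge> Suc (max n n0)" "(a + \<delta>) * real L1 < cnt V L1 x" using hq[of "Suc (max n n0)"] unfolding \<delta>_def by auto
    then obtain L where LL: "L1 = Suc L" by (cases L1) auto
    have "real n0 \<le> real L" using L1 LL by simp
    then have "2*(a+\<delta>/2+1)/\<delta> \<le> real L" using n0 by linarith
    then have h: "a+\<delta>/2+1 \<le> real L * \<delta> / 2" using d0 by (simp add: field_simps)
    have c: "cnt V L1 x \<le> 1 + cnt V L (T x)" unfolding LL cnt_Suc by (simp add: indicator_def)
    have "(a + \<delta>/2) * real L = (a+\<delta>) * real L1 - real L * \<delta>/2 - (a+\<delta>)" unfolding LL by (simp add: algebra_simps)
    also have "\<dots> < cnt V L (T x)" using h L1(2) c a0 d0 by linarith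
    finally have "(a + \<delta>/2) * real L < cnt V L (T x)" .
    then show "\<exists>L\<ge>n. (a + 1/(real (2*q+1)+1)) * real L < cnt V L (T x)"
      unfolding d2 using L1(1) LL by (intro exI[of _ L]) auto
  qed
  then show "T x \<in> Sset V a" unfolding Sset_def using T_space[OF x] by blast
qed


lemma upper:
  assumes V[measurable]: "V \<in> sets M" and a: "measure M V < a"
  shows "measure M (Sset V a) = 0"
proof (rule ccontr)
  assume ne: "measure M (Sset V a) \<noteq> 0"
  have a0: "0 \<le> a" using a measure_nonneg[of M V] by linarith
  have Sm: "Sset V a \<in> sets M" by (rule Sset_meas[OF V])
  have inv: "T -` Sset V a \<inter> space M = Sset V a"
  proof -
    have "x \<in> T -` Sset V a \<inter> space M \<longleftrightarrow> x \<in> Sset V a" for x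
    proof (cases "x \<in> space M")
      case True then show ?thesis using Sset_inv[OF a0 True, of V] by simp
    next
      case False then show ?thesis unfolding Sset_def by simp
    qed
    then show ?thesis by blast
  qed
  then have S1: "measure M (Sset V a) = 1" using ergo ne Sm unfolding ergodic_map_def by blast
  define E where "E N = {x\<in>space M. \<forall>L. 1 \<le> L \<and> L \<le> N \<longrightarrow> cnt V L x \<le> a * real L}" for N
  have Em[measurable]: "E N \<in> sets M" for N unfolding E_def by measurable
  have dec: "decseq E" unfolding decseq_def E_def by auto
  have sub: "(\<Inter>N. E N) \<subseteq> space M - Sset V a"
  proof
    fix x assume xE: "x \<in> (\<Inter>N. E N)"
    show "x \<in> space M - Sset V a"
    proof
      show "x \<in> space M" using xE unfolding E_def by auto
      show "x \<notin> Sset V a"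
      proof
        assume "x \<in> Sset V a"
        then obtain q where hq: "\<And>n. \<exists>L\<ge>n. (a + 1/(real q+1)) * real L < cnt V L x"
          unfolding Sset_def by auto
        obtain L where L: "L \<ge> 1" "(a + 1/(real q+1)) * real L < cnt V L x" using hq[of 1] by auto
        have "cnt V L x \<le> a * real L" using xE L(1) unfolding E_def by auto
        moreover have "a * real L \<le> (a + 1/(real q+1)) * real L" by (intro mult_right_mono) auto
        ultimately show False using L(2) by linarith
      qed
    qed
  qed
  have "measure M (\<Inter>N. E N) \<le> measure M (space M - Sset V a)"
    using sub Sm by (intro finite_measure_mono) auto
  also have "\<dots> = 0" using prob_compl[OF Sm] S1 by simp
  finally have m0: "measure M (\<Inter>N. E N) = 0" using measure_nonneg[of M "\<Inter>N. E N"] by linarith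
  have lim: "(\<lambda>N. measure M (E N)) \<longlonglongrightarrow> 0"
  proof -
    have "range E \<subseteq> sets M" using Em by auto
    then show ?thesis using finite_Lim_measure_decseq[OF _ dec] m0 by simp
  qed
  have key: "a * (1 - measure M (E N)) \<le> measure M V" for N
  proof -
    have bnd: "a * (real K - real N - real K * measure M (E N)) \<le> real K * measure M V" for K
    proof -
      have pw: "a * (real K - real N - (\<Sum>i<K. indicator (E N) ((T^^i) x))) \<le> cnt V K x"
        if x: "x \<in> space M" for x
      proof -
        have H: "\<exists>L. 1 \<le> L \<and> L \<le> N \<and> a * real L < (\<Sum>j<L. indicator V ((T^^(i+j)) x))"
          if ni: "\<not> (T^^i) x \<in> E N" for i
        proof -
          from ni Tn_space[OF x, of i] obtain L where "1 \<le> L" "L \<le> N" "\<not> cnt V L ((T^^i) x) \<le> a * real L"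
            unfolding E_def by auto
          then show ?thesis unfolding cnt_shift by (intro exI[of _ L]) auto
        qed
        have "a * (real K - real N - (\<Sum>i<K. if (T^^(0+i)) x \<in> E N then 1 else 0)) \<le> (\<Sum>i<K. indicator V ((T^^(0+i)) x))"
          by (rule block[where e="\<lambda>i. (T^^i) x \<in> E N" and a="\<lambda>i. indicator V ((T^^i) x)", OF _ a0 H]) simp
        then show ?thesis by (simp only: cnt_def indicator_def of_bool_def add_0)
      qed
      define f where "f x = (\<Sum>i<K. indicator (E N) ((T^^i) x) :: real)" for x
      have int1: "integrable M f"
        unfolding f_def by (auto intro!: integrable_sum int_ind_int)
      have I1: "(\<integral>x. a * (real K - real N - f x) \<partial>M) \<le> (\<integral>x. cnt V K x \<partial>M)"
      proof -
        have int2: "integrable M (\<lambda>x. a * (real K - real N - f x))" using int1 by auto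
        show ?thesis using pw by (intro integral_mono[OF int2 integrable_cnt[OF V]]) (simp add: f_def)
      qed
      have I2: "(\<integral>x. f x \<partial>M) = (\<Sum>i<K. measure M (E N))"
        unfolding f_def by (subst Bochner_Integration.integral_sum) (auto intro!: int_ind_int simp: int_ind)
      have "(\<integral>x. a * (real K - real N - f x) \<partial>M) = (\<integral>x. a * (real K - real N) - a * f x \<partial>M)"
        by (simp add: algebra_simps)
      also have "\<dots> = (\<integral>x. a * (real K - real N) \<partial>M) - (\<integral>x. a * f x \<partial>M)"
        by (rule Bochner_Integration.integral_diff) (auto intro: int1)
      also have "\<dots> = a * (real K - real N) - a * (\<integral>x. f x \<partial>M)"
        by (simp add: prob_space)
      finally have I3: "(\<integral>x. a * (real K - real N - f x) \<partial>M) = a * (real K - real N) - a * (\<integral>x. f x \<partial>M)" .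
      have "a * (real K - real N) - a * (real K * measure M (E N)) \<le> real K * measure M V"
        using I1 I2 I3 int_cnt[OF V, of K] by simp
      then show ?thesis by (simp add: right_diff_distrib)
    qed
    have l1: "(\<lambda>K. a * (1 - measure M (E N)) - a * real N / real K) \<longlonglongrightarrow> a * (1 - measure M (E N)) - 0"
      by (intro tendsto_diff tendsto_const lim_const_over_n)
    show ?thesis
    proof (rule LIMSEQ_le_const2[OF l1[simplified]])
      show "\<exists>N0. \<forall>K\<ge>N0. a * (1 - measure M (E N)) - a * real N / real K \<le> measure M V"
      proof (intro exI[of _ 1] allI impI)
        fix K :: nat assume K: "1 \<le> K"
        have "a * (1 - measure M (E N)) - a * real N / real K = (a * (real K - real N - real K * measure M (E N))) / real K"
          using K by (simp add: field_simps)
        also have "\<dots> \<le> (real K * measure M V) / real K" using bnd[of K] K by (intro divide_right_mono) auto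
        also have "\<dots> = measure M V" using K by simp
        finally show "a * (1 - measure M (E N)) - a * real N / real K \<le> measure M V" .
      qed
    qed
  qed
  have l2: "(\<lambda>N. a * (1 - measure M (E N))) \<longlonglongrightarrow> a * (1 - 0)"
    by (intro tendsto_mult tendsto_diff tendsto_const lim)
  have "a \<le> measure M V" using LIMSEQ_le_const2[OF l2] key by auto
  then show False using a by simp
qed


lemma AE_notS:
  assumes V: "V \<in> sets M" and a: "measure M V < a"
  shows "AE x in M. x \<notin> Sset V a"
proof (rule AE_not_in)
  show "Sset V a \<in> null_sets M"
    using upper[OF V a] Sset_meas[OF V] by (simp add: null_sets_def emeasure_eq_measure)
qed

lemma ae_conv:
  assumes V[measurable]: "V \<in> sets M"
  shows "AE x in M. (\<lambda>L. cnt V L x / real L) \<longlonglongrightarrow> measure M V"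
proof -
  have V': "space M - V \<in> sets M" by measurable
  have mc: "measure M (space M - V) = 1 - measure M V" by (rule prob_compl[OF V])
  have "AE x in M. \<forall>q::nat. x \<notin> Sset V (measure M V + 1/(real q+1)) \<and>
      x \<notin> Sset (space M - V) (measure M (space M - V) + 1/(real q+1))"
    unfolding AE_all_countable
    by (intro allI AE_conjI AE_notS V V') auto
  moreover note AE_space
  ultimately show ?thesis
  proof eventually_elim
    fix x assume h: "\<forall>q::nat. x \<notin> Sset V (measure M V + 1/(real q+1)) \<and>
      x \<notin> Sset (space M - V) (measure M (space M - V) + 1/(real q+1))" and x: "x \<in> space M"
    then have nS: "\<And>q::nat. x \<notin> Sset V (measure M V + 1/(real q+1))"
      and nS': "\<And>q::nat. x \<notin> Sset (space M - V) (measure M (space M - V) + 1/(real q+1))" by auto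
    show "(\<lambda>L. cnt V L x / real L) \<longlonglongrightarrow> measure M V"
    proof (rule LIMSEQ_I)
      fix r :: real assume r: "0 < r"
      obtain q :: nat where q: "inverse (real (Suc q)) < r/2" using reals_Archimedean[of "r/2"] r by auto
      define \<delta> where "\<delta> = 1/(real q+1)"
      have dr: "2*\<delta> < r" using q unfolding \<delta>_def by (simp add: inverse_eq_divide add.commute)
      have d0: "0 < \<delta>" unfolding \<delta>_def by simp
      from nS[of q] x have "\<not> (\<forall>n. \<exists>L\<ge>n. (measure M V + \<delta> + \<delta>) * real L < cnt V L x)"
        unfolding Sset_def \<delta>_def by blast
      then obtain n1 where n1: "\<And>L. L \<ge> n1 \<Longrightarrow> cnt V L x \<le> (measure M V + \<delta> + \<delta>) * real L"
        by (meson not_less)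
      from nS'[of q] x have "\<not> (\<forall>n. \<exists>L\<ge>n. (1 - measure M V + \<delta> + \<delta>) * real L < cnt (space M - V) L x)"
        unfolding Sset_def \<delta>_def mc by blast
      then obtain n2 where n2: "\<And>L. L \<ge> n2 \<Longrightarrow> cnt (space M - V) L x \<le> (1 - measure M V + \<delta> + \<delta>) * real L"
        by (meson not_less)
      show "\<exists>no. \<forall>n\<ge>no. norm (cnt V n x / real n - measure M V) < r"
      proof (intro exI[of _ "Suc (max n1 n2)"] allI impI)
        fix L assume L: "Suc (max n1 n2) \<le> L"
        then have Lp: "0 < real L" by simp
        have u: "cnt V L x \<le> (measure M V + 2*\<delta>) * real L" using n1[of L] L by (simp add: algebra_simps)
        have l: "real L - cnt V L x \<le> (1 - measure M V + 2*\<delta>) * real L" using n2[of L] L cnt_compl[OF x] by (simp add: algebra_simps)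
        have u': "cnt V L x / real L \<le> measure M V + 2*\<delta>" using u Lp by (simp add: divide_le_eq)
        have l': "measure M V - 2*\<delta> \<le> cnt V L x / real L" using l Lp by (simp add: le_divide_eq algebra_simps)
        show "norm (cnt V L x / real L - measure M V) < r" using u' l' dr by (simp add: abs_if)
      qed
    qed
  qed
qed

lemma L1_conv:
  assumes V[measurable]: "V \<in> sets M"
  shows "(\<lambda>L. \<integral>x. \<bar>cnt V L x / real L - measure M V\<bar> \<partial>M) \<longlonglongrightarrow> 0"
proof -
  have "(\<lambda>L. \<integral>x. \<bar>cnt V L x / real L - measure M V\<bar> \<partial>M) \<longlonglongrightarrow> (\<integral>x. 0 \<partial>M)"
  proof (rule integral_dominated_convergence[where w="\<lambda>_. 1"])
    show "AE x in M. (\<lambda>L. \<bar>cnt V L x / real L - measure M V\<bar>) \<longlonglongrightarrow> 0"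
      using ae_conv[OF V] by eventually_elim (auto intro: tendsto_rabs_zero LIM_zero)
    show "AE x in M. norm \<bar>cnt V L x / real L - measure M V\<bar> \<le> 1" for L
    proof (rule AE_I2)
      fix x
      have a: "0 \<le> cnt V L x / real L" using cnt_nonneg by simp
      have b: "cnt V L x / real L \<le> 1"
        using cnt_le[of V L x] by (cases "L = 0") (auto simp: divide_le_eq)
      have c: "0 \<le> measure M V" "measure M V \<le> 1" by auto
      have "\<bar>cnt V L x / real L - measure M V\<bar> \<le> 1" unfolding abs_le_iff using a b c by linarith
      then show "norm \<bar>cnt V L x / real L - measure M V\<bar> \<le> 1" by simp
    qed
  qed auto
  then show ?thesis by simp
qed

lemma recurrence:
  assumes U[measurable]: "U \<in> sets M" and pos: "measure M U > 0"
  shows "AE x in M. \<forall>n. \<exists>j>n. (T^^j) x \<in> U"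
  using ae_conv[OF U]
proof eventually_elim
  fix x assume lim: "(\<lambda>L. cnt U L x / real L) \<longlonglongrightarrow> measure M U"
  show "\<forall>n. \<exists>j>n. (T^^j) x \<in> U"
  proof (rule ccontr)
    assume "\<not> (\<forall>n. \<exists>j>n. (T^^j) x \<in> U)"
    then obtain n where n: "\<And>j. j > n \<Longrightarrow> (T^^j) x \<notin> U" by auto
    have b: "cnt U L x \<le> real (Suc n)" for L
    proof -
      have "cnt U L x = (\<Sum>i\<in>{..<L} \<inter> {..n}. indicator U ((T^^i) x))"
        unfolding cnt_def by (rule sum.mono_neutral_right) (auto simp: n indicator_def not_le)
      also have "\<dots> \<le> (\<Sum>i\<in>{..n}. indicator U ((T^^i) x))"
        by (rule sum_mono2) auto
      also have "\<dots> \<le> (\<Sum>i\<in>{..n}. (1::real))" by (rule sum_mono) (auto simp: indicator_def)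
      finally show ?thesis by simp
    qed
    have "(\<lambda>L. cnt U L x / real L) \<longlonglongrightarrow> 0"
    proof (rule tendsto_sandwich[of "\<lambda>_. 0" _ _ "\<lambda>L. real (Suc n) / real L"])
      show "\<forall>\<^sub>F L in sequentially. 0 \<le> cnt U L x / real L" using cnt_nonneg by auto
      show "\<forall>\<^sub>F L in sequentially. cnt U L x / real L \<le> real (Suc n) / real L"
        using b by (intro always_eventually allI divide_right_mono) auto
      show "(\<lambda>L. real (Suc n) / real L) \<longlonglongrightarrow> 0" by (rule lim_const_over_n)
    qed auto
    with lim have "measure M U = 0" using LIMSEQ_unique by blast
    then show False using pos by simp
  qed
qed


lemma cover_bound:
  assumes "X \<in> sets M" "Y \<in> sets M" "Z \<in> sets M" "X \<subseteq> Z \<union> Y"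
  shows "measure M X \<le> measure M Z + measure M Y"
proof -
  have "measure M X \<le> measure M (Z \<union> Y)" using assms by (intro finite_measure_mono) auto
  also have "\<dots> \<le> measure M Z + measure M Y" using assms by (intro measure_Un_le) auto
  finally show ?thesis .
qed

lemma hit_bound:
  assumes B[measurable]: "B \<in> sets M" and J: "finite J"
  shows "measure M {x\<in>space M. \<exists>j\<in>J. (T^^j) x \<in> B} \<le> real (card J) * measure M B"
proof -
  have "{x\<in>space M. \<exists>j\<in>J. (T^^j) x \<in> B} = (\<Union>j\<in>J. {x\<in>space M. (T^^j) x \<in> B})" by auto
  then have "measure M {x\<in>space M. \<exists>j\<in>J. (T^^j) x \<in> B} \<le> (\<Sum>j\<in>J. measure M {x\<in>space M. (T^^j) x \<in> B})"
    using J by (auto intro!: measure_UNION_le)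
  also have "\<dots> = real (card J) * measure M B" using pres[OF B] by simp
  finally show ?thesis .
qed

lemma cnt_add: "cnt V (a+b) x = cnt V a x + cnt V b ((T^^a) x)"
  unfolding cnt_def using sum_split_nat[of "\<lambda>i. indicator V ((T^^i) x)" a b]
  by (simp add: funpow_add add.commute)

lemma cnt_T: "\<bar>cnt V m (T x) - cnt V m x\<bar> \<le> 1"
proof -
  have "cnt V (Suc m) x = indicator V x + cnt V m (T x)" by (rule cnt_Suc)
  moreover have "cnt V (Suc m) x = cnt V m x + indicator V ((T^^m) x)"
    unfolding cnt_def by simp
  ultimately have "cnt V m (T x) - cnt V m x = indicator V ((T^^m) x) - indicator V x" by linarith
  then show ?thesis by (auto simp: indicator_def)
qed

lemma induced_eq: "induced_map T U x = (if \<exists>j\<ge>1. (T^^j) x \<in> U then (T^^(LEAST j. j \<ge> 1 \<and> (T^^j) x \<in> U)) x else x)"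
  unfolding induced_map_def entry_time_def by auto

lemma induced_meas[measurable]: assumes [measurable]: "U \<in> sets M" shows "induced_map T U \<in> measurable M M"
proof -
  have "(\<lambda>x. if \<exists>j\<ge>1. (T^^j) x \<in> U then (T^^(LEAST j. j \<ge> 1 \<and> (T^^j) x \<in> U)) x else x) \<in> measurable M M"
  proof (rule measurable_If)
    show "(\<lambda>x. (T^^(LEAST j. j \<ge> 1 \<and> (T^^j) x \<in> U)) x) \<in> measurable M M"
      by (rule measurable_compose_countable[OF Tn_meas]) measurable
    show "{x\<in>space M. \<exists>j\<ge>1. (T^^j) x \<in> U} \<in> sets M" by measurable
  qed auto
  then show ?thesis by (simp add: induced_eq[abs_def])
qed

lemma inducedn_meas[measurable]: assumes [measurable]: "U \<in> sets M" shows "(induced_map T U ^^ n) \<in> measurable M M"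
  by (induction n) (auto simp: funpow_Suc_right)


lemma key:
  assumes BU: "B \<subseteq> U" and inf: "\<forall>n. \<exists>j>n. (T^^j) x \<in> U"
  shows "(\<forall>j. 1 \<le> j \<and> j \<le> m \<longrightarrow> (T^^j) x \<notin> B) \<longleftrightarrow>
         (\<forall>k. 1 \<le> k \<and> real k \<le> cnt U m (T x) \<longrightarrow> (induced_map T U ^^ k) x \<notin> B)"
  using inf
proof (induction m arbitrary: x rule: less_induct)
  case (less m x)
  have ex': "\<exists>j. j \<ge> 1 \<and> (T^^j) x \<in> U"
  proof -
    obtain j where "j > 0" "(T^^j) x \<in> U" using less.prems by blast
    then show ?thesis by (intro exI[of _ j]) auto
  qed
  then have ex: "\<exists>j\<ge>1. (T^^j) x \<in> U" by auto
  define r where "r = (LEAST j. j \<ge> 1 \<and> (T^^j) x \<in> U)"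
  have r1: "r \<ge> 1" "(T^^r) x \<in> U" using LeastI_ex[OF ex'] unfolding r_def by auto
  have rmin: "\<And>j. j < r \<Longrightarrow> 1 \<le> j \<Longrightarrow> (T^^j) x \<notin> U" using not_less_Least unfolding r_def by blast
  have hT: "induced_map T U x = (T^^r) x" using induced_eq ex unfolding r_def by simp
  define y where "y = (T^^r) x"
  obtain r' where r': "r = Suc r'" using r1 by (cases r) auto
  have cnt_r: "cnt U r (T x) = 1"
  proof -
    have e1: "cnt U r (T x) = (\<Sum>i<r'. indicator U ((T^^(Suc i)) x)) + indicator U ((T^^r) x)"
      unfolding cnt_def r' by (simp add: funpow_Suc_right del: funpow.simps)
    have e2: "(\<Sum>i<r'. indicator U ((T^^(Suc i)) x)) = (\<Sum>i<r'. (0::real))"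
    proof (rule sum.cong)
      fix i assume "i \<in> {..<r'}"
      then have "(T^^Suc i) x \<notin> U" using rmin[of "Suc i"] r' by simp
      then show "indicator U ((T^^(Suc i)) x) = (0::real)" by (simp add: indicator_def del: funpow.simps)
    qed simp
    show ?thesis using r1 e1 e2 by simp
  qed
  show ?case
  proof (cases "m < r")
    case True
    have c0: "cnt U m (T x) = 0"
    proof -
      have "cnt U m (T x) = (\<Sum>i<m. indicator U ((T^^(Suc i)) x))" unfolding cnt_def by (simp add: funpow_swap1)
      also have "\<dots> = (\<Sum>i<m. (0::real))"
      proof (rule sum.cong)
        fix i assume "i \<in> {..<m}"
        then have "(T^^Suc i) x \<notin> U" using rmin[of "Suc i"] True by simp
        then show "indicator U ((T^^(Suc i)) x) = (0::real)" by (simp add: indicator_def del: funpow.simps)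
      qed simp
      finally show ?thesis by simp
    qed
    have "\<forall>j. 1 \<le> j \<and> j \<le> m \<longrightarrow> (T^^j) x \<notin> B" using rmin True BU by fastforce
    moreover have "\<forall>k. 1 \<le> k \<and> real k \<le> cnt U m (T x) \<longrightarrow> (induced_map T U ^^ k) x \<notin> B"
      using c0 by auto
    ultimately show ?thesis by blast
  next
    case False
    then have rm: "r \<le> m" by simp
    have yinf: "\<forall>n. \<exists>j>n. (T^^j) y \<in> U"
    proof
      fix n
      obtain j where j: "j > n + r" "(T^^j) x \<in> U" using less.prems by blast
      have jr: "j - r + r = j" using j by simp
      have "(T^^(j-r)) y = (T^^(j-r+r)) x" unfolding y_def by (simp only: funpow_add comp_apply)
      then have "(T^^(j-r)) y = (T^^j) x" using jr by simp
      then show "\<exists>j>n. (T^^j) y \<in> U" using j by (intro exI[of _ "j-r"]) auto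
    qed
    have Ty: "(T^^r) (T x) = T y" unfolding y_def by (simp add: funpow_swap1)
    have csplit: "cnt U m (T x) = 1 + cnt U (m-r) (T y)"
      using cnt_add[of U r "m-r" "T x"] rm cnt_r Ty by simp
    have IH: "(\<forall>j. 1 \<le> j \<and> j \<le> m-r \<longrightarrow> (T^^j) y \<notin> B) \<longleftrightarrow>
         (\<forall>k. 1 \<le> k \<and> real k \<le> cnt U (m-r) (T y) \<longrightarrow> (induced_map T U ^^ k) y \<notin> B)"
      using less.IH[of "m-r" y] yinf r1 rm by simp
    have Ty2: "\<And>j. (T^^j) y = (T^^(j+r)) x" unfolding y_def by (simp add: funpow_add)
    have L: "(\<forall>j. 1 \<le> j \<and> j \<le> m \<longrightarrow> (T^^j) x \<notin> B) \<longleftrightarrow>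
        y \<notin> B \<and> (\<forall>j. 1 \<le> j \<and> j \<le> m-r \<longrightarrow> (T^^j) y \<notin> B)"
    proof
      assume h: "\<forall>j. 1 \<le> j \<and> j \<le> m \<longrightarrow> (T^^j) x \<notin> B"
      show "y \<notin> B \<and> (\<forall>j. 1 \<le> j \<and> j \<le> m-r \<longrightarrow> (T^^j) y \<notin> B)"
        using h r1 rm unfolding Ty2 by (auto simp: y_def)
    next
      assume h: "y \<notin> B \<and> (\<forall>j. 1 \<le> j \<and> j \<le> m-r \<longrightarrow> (T^^j) y \<notin> B)"
      show "\<forall>j. 1 \<le> j \<and> j \<le> m \<longrightarrow> (T^^j) x \<notin> B"
      proof (intro allI impI)
        fix j assume j: "1 \<le> j \<and> j \<le> m"
        show "(T^^j) x \<notin> B"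
        proof (cases "j < r")
          case True then show ?thesis using rmin j BU by blast
        next
          case False
          show ?thesis
          proof (cases "j = r")
            case True then show ?thesis using h y_def by simp
          next
            case False
            then have "1 \<le> j - r" "j - r \<le> m - r" using \<open>\<not> j < r\<close> j by auto
            then have "(T^^(j-r)) y \<notin> B" using h by blast
            then show ?thesis unfolding Ty2 using \<open>\<not> j < r\<close> by simp
          qed
        qed
      qed
    qed
    have hTs: "\<And>k. (induced_map T U ^^ Suc k) x = (induced_map T U ^^ k) y"
      using hT unfolding y_def by (simp only: funpow_Suc_right comp_apply)
    have cn: "0 \<le> cnt U (m-r) (T y)" by (rule cnt_nonneg)
    have R: "(\<forall>k. 1 \<le> k \<and> real k \<le> cnt U m (T x) \<longrightarrow> (induced_map T U ^^ k) x \<notin> B) \<longleftrightarrow>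
        y \<notin> B \<and> (\<forall>k. 1 \<le> k \<and> real k \<le> cnt U (m-r) (T y) \<longrightarrow> (induced_map T U ^^ k) y \<notin> B)"
    proof
      assume h: "\<forall>k. 1 \<le> k \<and> real k \<le> cnt U m (T x) \<longrightarrow> (induced_map T U ^^ k) x \<notin> B"
      have "y \<notin> B" using h[rule_format, of 1] hTs[of 0] csplit cn by simp
      moreover have "\<forall>k. 1 \<le> k \<and> real k \<le> cnt U (m-r) (T y) \<longrightarrow> (induced_map T U ^^ k) y \<notin> B"
      proof (intro allI impI)
        fix k assume k: "1 \<le> k \<and> real k \<le> cnt U (m-r) (T y)"
        then have "1 \<le> Suc k \<and> real (Suc k) \<le> cnt U m (T x)" using csplit by simp
        then show "(induced_map T U ^^ k) y \<notin> B" using h hTs[of k] by metis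
      qed
      ultimately show "y \<notin> B \<and> (\<forall>k. 1 \<le> k \<and> real k \<le> cnt U (m-r) (T y) \<longrightarrow> (induced_map T U ^^ k) y \<notin> B)" by blast
    next
      assume h: "y \<notin> B \<and> (\<forall>k. 1 \<le> k \<and> real k \<le> cnt U (m-r) (T y) \<longrightarrow> (induced_map T U ^^ k) y \<notin> B)"
      show "\<forall>k. 1 \<le> k \<and> real k \<le> cnt U m (T x) \<longrightarrow> (induced_map T U ^^ k) x \<notin> B"
      proof (intro allI impI)
        fix k assume k: "1 \<le> k \<and> real k \<le> cnt U m (T x)"
        then obtain k' where k': "k = Suc k'" by (cases k) auto
        show "(induced_map T U ^^ k) x \<notin> B"
        proof (cases "k' = 0")
          case True then show ?thesis using h hTs[of 0] k' by simp
        next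
          case False
          then have "1 \<le> k' \<and> real k' \<le> cnt U (m-r) (T y)" using k k' csplit by simp
          then show ?thesis using h hTs[of k'] k' by simp
        qed
      qed
    qed
    show ?thesis using L R IH by blast
  qed
qed


definition Eset :: "'a set \<Rightarrow> nat \<Rightarrow> 'a set" where
  "Eset B m = {x\<in>space M. \<forall>j. 1 \<le> j \<and> j \<le> m \<longrightarrow> (T^^j) x \<notin> B}"

definition Ehat :: "'a set \<Rightarrow> 'a set \<Rightarrow> nat \<Rightarrow> 'a set" where
  "Ehat U B n = {x\<in>U \<inter> space M. \<forall>k. 1 \<le> k \<and> k \<le> n \<longrightarrow> (induced_map T U ^^ k) x \<notin> B}"

definition Dv :: "'a set \<Rightarrow> nat \<Rightarrow> real" where
  "Dv U m = (\<integral>x. \<bar>cnt U m x / real m - measure M U\<bar> \<partial>M)"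

definition Good :: "'a set \<Rightarrow> 'a set" where
  "Good U = {x\<in>space M. \<forall>n. \<exists>j>n. (T^^j) x \<in> U}"

lemma Eset_meas[measurable]: assumes [measurable]: "B \<in> sets M" shows "Eset B m \<in> sets M"
  unfolding Eset_def by measurable

lemma Ehat_meas[measurable]: assumes [measurable]: "U \<in> sets M" "B \<in> sets M" shows "Ehat U B n \<in> sets M"
  unfolding Ehat_def by measurable

lemma Good_meas[measurable]: assumes [measurable]: "U \<in> sets M" shows "Good U \<in> sets M"
  unfolding Good_def by measurable

lemma Good_null: assumes U: "U \<in> sets M" and pos: "measure M U > 0"
  shows "measure M (space M - Good U) = 0"
proof -
  have "emeasure M (space M - Good U) = 0"
  proof -
    have "space M - Good U \<in> sets M" using Good_meas[OF U] by auto
    moreover have "{x\<in>space M. \<not> (\<forall>n. \<exists>j>n. (T^^j) x \<in> U)} = space M - Good U" unfolding Good_def by blast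
    ultimately show ?thesis by (rule AE_iff_measurable[THEN iffD1, OF _ _ recurrence[OF U pos]])
  qed
  then show ?thesis by (simp add: measure_def)
qed

lemma Eset_mono: "m \<le> m' \<Longrightarrow> Eset B m' \<subseteq> Eset B m"
  unfolding Eset_def by auto

lemma lip:
  assumes B: "B \<in> sets M" and mm: "m \<le> m'"
  shows "measure M (Eset B m) \<le> measure M (Eset B m') + real (m' - m) * measure M B"
proof -
  have hm: "{x\<in>space M. \<exists>j\<in>{m<..m'}. (T^^j) x \<in> B} \<in> sets M" using B by measurable
  have inc: "Eset B m \<subseteq> Eset B m' \<union> {x\<in>space M. \<exists>j\<in>{m<..m'}. (T^^j) x \<in> B}"
  proof
    fix x assume x: "x \<in> Eset B m"
    show "x \<in> Eset B m' \<union> {x\<in>space M. \<exists>j\<in>{m<..m'}. (T^^j) x \<in> B}"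
    proof (cases "x \<in> Eset B m'")
      case False
      then obtain j where j: "1 \<le> j" "j \<le> m'" "(T^^j) x \<in> B" using x unfolding Eset_def by auto
      have "\<not> j \<le> m" using x j unfolding Eset_def by auto
      then show ?thesis using x j unfolding Eset_def by auto
    qed simp
  qed
  have "measure M (Eset B m) \<le> measure M (Eset B m') + measure M {x\<in>space M. \<exists>j\<in>{m<..m'}. (T^^j) x \<in> B}"
    by (rule cover_bound[OF Eset_meas[OF B] hm Eset_meas[OF B] inc])
  also have "\<dots> \<le> measure M (Eset B m') + real (card {m<..m'}) * measure M B"
    using hit_bound[OF B, of "{m<..m'}"] by simp
  finally show ?thesis by simp
qed

lemma Eset_mono_meas: "B \<in> sets M \<Longrightarrow> m \<le> m' \<Longrightarrow> measure M (Eset B m') \<le> measure M (Eset B m)"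
  by (intro finite_measure_mono Eset_mono Eset_meas)

lemma stepA1:
  assumes U: "U \<in> sets M" and B: "B \<in> sets M" and BU: "B \<subseteq> U" and pos: "measure M U > 0"
  shows "measure M (U \<inter> Eset B m) \<le> measure M (Ehat U B n) + measure M {x\<in>space M. cnt U m (T x) < real n}"
proof -
  have dm: "{x\<in>space M. cnt U m (T x) < real n} \<in> sets M" using U by measurable
  have "U \<inter> Eset B m \<subseteq> (Ehat U B n \<union> {x\<in>space M. cnt U m (T x) < real n}) \<union> (space M - Good U)"
  proof
    fix x assume x: "x \<in> U \<inter> Eset B m"
    show "x \<in> (Ehat U B n \<union> {x\<in>space M. cnt U m (T x) < real n}) \<union> (space M - Good U)"
    proof (cases "x \<in> Good U \<and> \<not> cnt U m (T x) < real n")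
      case True
      then have inf: "\<forall>n. \<exists>j>n. (T^^j) x \<in> U" and c: "real n \<le> cnt U m (T x)" unfolding Good_def by auto
      have "\<forall>j. 1 \<le> j \<and> j \<le> m \<longrightarrow> (T^^j) x \<notin> B" using x unfolding Eset_def by auto
      then have "\<forall>k. 1 \<le> k \<and> real k \<le> cnt U m (T x) \<longrightarrow> (induced_map T U ^^ k) x \<notin> B"
        using key[OF BU inf] by blast
      then have "x \<in> Ehat U B n" using x c unfolding Ehat_def Eset_def by auto
      then show ?thesis by blast
    next
      case False then show ?thesis using x unfolding Eset_def by auto
    qed
  qed
  then have "measure M (U \<inter> Eset B m) \<le> measure M (Ehat U B n \<union> {x\<in>space M. cnt U m (T x) < real n}) + measure M (space M - Good U)"
    using U B dm by (intro cover_bound) auto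
  also have "\<dots> \<le> measure M (Ehat U B n) + measure M {x\<in>space M. cnt U m (T x) < real n}"
    using Good_null[OF U pos] measure_Un_le[of "Ehat U B n" M "{x\<in>space M. cnt U m (T x) < real n}"] U B dm by simp
  finally show ?thesis .
qed

lemma stepA2:
  assumes U: "U \<in> sets M" and B: "B \<in> sets M" and BU: "B \<subseteq> U" and pos: "measure M U > 0"
  shows "measure M (Ehat U B n) \<le> measure M (U \<inter> Eset B m) + measure M {x\<in>space M. real n < cnt U m (T x)}"
proof -
  have dm: "{x\<in>space M. real n < cnt U m (T x)} \<in> sets M" using U by measurable
  have "Ehat U B n \<subseteq> ((U \<inter> Eset B m) \<union> {x\<in>space M. real n < cnt U m (T x)}) \<union> (space M - Good U)"
  proof
    fix x assume x: "x \<in> Ehat U B n"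
    show "x \<in> ((U \<inter> Eset B m) \<union> {x\<in>space M. real n < cnt U m (T x)}) \<union> (space M - Good U)"
    proof (cases "x \<in> Good U \<and> \<not> real n < cnt U m (T x)")
      case True
      then have inf: "\<forall>n. \<exists>j>n. (T^^j) x \<in> U" and c: "cnt U m (T x) \<le> real n" unfolding Good_def by auto
      have "\<forall>k. 1 \<le> k \<and> real k \<le> cnt U m (T x) \<longrightarrow> (induced_map T U ^^ k) x \<notin> B"
      proof (intro allI impI)
        fix k assume k: "1 \<le> k \<and> real k \<le> cnt U m (T x)"
        then have "k \<le> n" using c by linarith
        then show "(induced_map T U ^^ k) x \<notin> B" using x k unfolding Ehat_def by auto
      qed
      then have "\<forall>j. 1 \<le> j \<and> j \<le> m \<longrightarrow> (T^^j) x \<notin> B" using key[OF BU inf] by blast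
      then have "x \<in> U \<inter> Eset B m" using x unfolding Ehat_def Eset_def by auto
      then show ?thesis by blast
    next
      case False then show ?thesis using x unfolding Ehat_def by auto
    qed
  qed
  then have "measure M (Ehat U B n) \<le> measure M ((U \<inter> Eset B m) \<union> {x\<in>space M. real n < cnt U m (T x)}) + measure M (space M - Good U)"
    using U B dm by (intro cover_bound) auto
  also have "\<dots> \<le> measure M (U \<inter> Eset B m) + measure M {x\<in>space M. real n < cnt U m (T x)}"
    using Good_null[OF U pos] measure_Un_le[of "U \<inter> Eset B m" M "{x\<in>space M. real n < cnt U m (T x)}"] U B dm by simp
  finally show ?thesis .
qed

lemma int_dev: assumes U[measurable]: "U \<in> sets M"
  shows "(\<integral>x. \<bar>cnt U m x - real m * measure M U\<bar> \<partial>M) = real m * Dv U m"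
proof (cases "m = 0")
  case True then show ?thesis by (simp add: cnt_def)
next
  case False
  have "(\<integral>x. \<bar>cnt U m x - real m * measure M U\<bar> \<partial>M) = (\<integral>x. real m * \<bar>cnt U m x / real m - measure M U\<bar> \<partial>M)"
  proof (rule Bochner_Integration.integral_cong[OF refl])
    fix x
    have "cnt U m x - real m * measure M U = real m * (cnt U m x / real m - measure M U)" using False by (simp add: field_simps)
    then show "\<bar>cnt U m x - real m * measure M U\<bar> = real m * \<bar>cnt U m x / real m - measure M U\<bar>"
      by (simp add: abs_mult)
  qed
  then show ?thesis unfolding Dv_def by simp
qed

lemma markov_dev:
  assumes U[measurable]: "U \<in> sets M" and a: "0 < a"
  shows "measure M {x\<in>space M. a \<le> \<bar>cnt U m x - real m * measure M U\<bar>} \<le> real m * Dv U m / a"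
proof -
  have int: "integrable M (\<lambda>x. \<bar>cnt U m x - real m * measure M U\<bar>)"
    using integrable_cnt[OF U, of m] by auto
  show ?thesis
    using integral_Markov_inequality_measure[OF int _ _ a, of "space M"] int_dev[OF U, of m] by simp
qed

lemma dev_low:
  assumes U[measurable]: "U \<in> sets M" and a: "0 < a" and am: "a \<le> real m * measure M U - real n - 1"
  shows "measure M {x\<in>space M. cnt U m (T x) < real n} \<le> real m * Dv U m / a"
proof -
  have "measure M {x\<in>space M. cnt U m (T x) < real n} \<le> measure M {x\<in>space M. a \<le> \<bar>cnt U m x - real m * measure M U\<bar>}"
  proof (rule finite_measure_mono)
    show "{x\<in>space M. cnt U m (T x) < real n} \<subseteq> {x\<in>space M. a \<le> \<bar>cnt U m x - real m * measure M U\<bar>}"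
    proof safe
      fix x assume "x \<in> space M" and c: "cnt U m (T x) < real n"
      have h: "cnt U m x \<le> cnt U m (T x) + 1" using cnt_T[of U m x] by (simp add: abs_le_iff)
      have "a \<le> - (cnt U m x - real m * measure M U)" using h c am by linarith
      then show "a \<le> \<bar>cnt U m x - real m * measure M U\<bar>" by linarith
    qed
  qed measurable
  then show ?thesis using markov_dev[OF U a, of m] by linarith
qed

lemma dev_high:
  assumes U[measurable]: "U \<in> sets M" and a: "0 < a" and am: "a \<le> real n - 1 - real m * measure M U"
  shows "measure M {x\<in>space M. real n < cnt U m (T x)} \<le> real m * Dv U m / a"
proof -
  have "measure M {x\<in>space M. real n < cnt U m (T x)} \<le> measure M {x\<in>space M. a \<le> \<bar>cnt U m x - real m * measure M U\<bar>}"
  proof (rule finite_measure_mono)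
    show "{x\<in>space M. real n < cnt U m (T x)} \<subseteq> {x\<in>space M. a \<le> \<bar>cnt U m x - real m * measure M U\<bar>}"
    proof safe
      fix x assume "x \<in> space M" and c: "real n < cnt U m (T x)"
      have h: "cnt U m (T x) \<le> cnt U m x + 1" using cnt_T[of U m x] by (simp add: abs_le_iff)
      have "a \<le> (cnt U m x - real m * measure M U)" using h c am by linarith
      then show "a \<le> \<bar>cnt U m x - real m * measure M U\<bar>" by linarith
    qed
  qed measurable
  then show ?thesis using markov_dev[OF U a, of m] by linarith
qed


lemma stepB:
  assumes U[measurable]: "U \<in> sets M" and B[measurable]: "B \<in> sets M" and L: "1 \<le> L"
  shows "\<bar>measure M (U \<inter> Eset B m) - measure M U * measure M (Eset B m)\<bar> \<le> real L * measure M B + Dv U L"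
proof -
  define E where "E = Eset B m"
  have Em[measurable]: "E \<in> sets M" unfolding E_def by (rule Eset_meas[OF B])
  define W where "W i = {x\<in>space M. (T^^i) x \<in> U \<and> x \<in> E}" for i
  have Wm[measurable]: "W i \<in> sets M" for i unfolding W_def by measurable
  have XW: "\<bar>measure M (U \<inter> E) - measure M (W i)\<bar> \<le> real i * measure M B" for i
  proof -
    define X where "X = {x\<in>space M. (T^^i) x \<in> U \<inter> E}"
    define Z where "Z = {x\<in>space M. (T^^i) x \<in> U \<and> (\<forall>j. 1 \<le> j \<and> j \<le> m+i \<longrightarrow> (T^^j) x \<notin> B)}"
    define H1 where "H1 = {x\<in>space M. \<exists>j\<in>{1..i}. (T^^j) x \<in> B}"
    define H2 where "H2 = {x\<in>space M. \<exists>j\<in>{m<..m+i}. (T^^j) x \<in> B}"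
    have Xm: "X \<in> sets M" unfolding X_def by measurable
    have Zm: "Z \<in> sets M" unfolding Z_def by measurable
    have H1m: "H1 \<in> sets M" unfolding H1_def by measurable
    have H2m: "H2 \<in> sets M" unfolding H2_def by measurable
    have mX: "measure M X = measure M (U \<inter> E)" unfolding X_def by (rule pres) measurable
    have shift: "(T^^j) ((T^^i) x) = (T^^(j+i)) x" for j x by (simp add: funpow_add)
    have ZX: "Z \<subseteq> X"
    proof
      fix x assume x: "x \<in> Z"
      have "(T^^i) x \<in> E" unfolding E_def Eset_def
      proof (safe)
        show "(T^^i) x \<in> space M" using x Tn_space unfolding Z_def by auto
        fix j assume "1 \<le> j" "j \<le> m" "(T^^j) ((T^^i) x) \<in> B"
        then show False using x unfolding Z_def shift by auto
      qed
      then show "x \<in> X" using x unfolding X_def Z_def by auto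
    qed
    have XZ: "X \<subseteq> Z \<union> H1"
    proof
      fix x assume x: "x \<in> X"
      show "x \<in> Z \<union> H1"
      proof (cases "x \<in> H1")
        case False
        have "(T^^j) x \<notin> B" if j: "1 \<le> j" "j \<le> m+i" for j
        proof (cases "j \<le> i")
          case True then show ?thesis using False j x unfolding H1_def X_def by auto
        next
          case False
          then have "1 \<le> j - i" "j - i \<le> m" using j by auto
          then have "(T^^(j-i)) ((T^^i) x) \<notin> B" using x unfolding X_def E_def Eset_def by auto
          then show ?thesis unfolding shift using False by simp
        qed
        then show ?thesis using x unfolding X_def Z_def by auto
      qed simp
    qed
    have ZW: "Z \<subseteq> W i" unfolding Z_def W_def E_def Eset_def by auto
    have WZ: "W i \<subseteq> Z \<union> H2"
    proof
      fix x assume x: "x \<in> W i"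
      show "x \<in> Z \<union> H2"
      proof (cases "x \<in> H2")
        case False
        have "(T^^j) x \<notin> B" if j: "1 \<le> j" "j \<le> m+i" for j
        proof (cases "j \<le> m")
          case True then show ?thesis using j x unfolding W_def E_def Eset_def by auto
        next
          case False then show ?thesis using \<open>x \<notin> H2\<close> j x unfolding H2_def W_def by auto
        qed
        then show ?thesis using x unfolding W_def Z_def by auto
      qed simp
    qed
    have h1: "measure M H1 \<le> real i * measure M B" using hit_bound[OF B, of "{1..i}"] unfolding H1_def by simp
    have h2: "measure M H2 \<le> real i * measure M B" using hit_bound[OF B, of "{m<..m+i}"] unfolding H2_def by simp
    have a1: "measure M X \<le> measure M Z + measure M H1" by (rule cover_bound[OF Xm H1m Zm XZ])
    have a2: "measure M Z \<le> measure M X" by (rule finite_measure_mono[OF ZX Xm])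
    have a3: "measure M (W i) \<le> measure M Z + measure M H2" by (rule cover_bound[OF Wm H2m Zm WZ])
    have a4: "measure M Z \<le> measure M (W i)" by (rule finite_measure_mono[OF ZW Wm])
    show ?thesis using a1 a2 a3 a4 h1 h2 mX by (simp add: abs_le_iff)
  qed
  have sumW: "(\<Sum>i<L. measure M (W i)) = (\<integral>x. indicator E x * cnt U L x \<partial>M)"
  proof -
    have "(\<integral>x. indicator E x * cnt U L x \<partial>M) = (\<integral>x. (\<Sum>i<L. indicator E x * indicator U ((T^^i) x)) \<partial>M)"
      unfolding cnt_def by (simp add: sum_distrib_left)
    also have "\<dots> = (\<Sum>i<L. (\<integral>x. indicator E x * indicator U ((T^^i) x) \<partial>M))"
    proof (rule Bochner_Integration.integral_sum)
      fix i show "integrable M (\<lambda>x. indicator E x * indicator U ((T^^i) x) :: real)"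
        by (rule integrable_const_bound[where B=1]) (auto simp: indicator_def)
    qed
    also have "\<dots> = (\<Sum>i<L. measure M (W i))"
    proof (rule sum.cong[OF refl])
      fix i
      have "(\<integral>x. indicator E x * indicator U ((T^^i) x) \<partial>M) = (\<integral>x. indicator (W i) x \<partial>M :: real)"
        by (rule Bochner_Integration.integral_cong[OF refl]) (auto simp: indicator_def W_def)
      then show "(\<integral>x. indicator E x * indicator U ((T^^i) x) \<partial>M) = measure M (W i)"
        using sets.sets_into_space[OF Wm[of i]] by (simp add: Int_absorb2)
    qed
    finally show ?thesis by simp
  qed
  have dev: "\<bar>(\<integral>x. indicator E x * cnt U L x \<partial>M) - real L * measure M U * measure M E\<bar> \<le> real L * Dv U L"
  proof -
    have i1: "integrable M (\<lambda>x. indicator E x * cnt U L x :: real)"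
      by (rule integrable_const_bound[where B="real L"]) (auto simp: indicator_def cnt_le cnt_nonneg abs_of_nonneg)
    have i2: "integrable M (\<lambda>x. indicator E x * (real L * measure M U) :: real)"
      by (rule integrable_const_bound[where B="\<bar>real L * measure M U\<bar>"]) (auto simp: indicator_def)
    have i3: "integrable M (\<lambda>x. \<bar>cnt U L x - real L * measure M U\<bar>)"
      using integrable_cnt[OF U, of L] by auto
    have "(\<integral>x. indicator E x * cnt U L x \<partial>M) - real L * measure M U * measure M E
        = (\<integral>x. indicator E x * cnt U L x \<partial>M) - (\<integral>x. indicator E x * (real L * measure M U) \<partial>M)"
      using sets.sets_into_space[OF Em] by (simp add: Int_absorb2 mult.commute)
    also have "\<dots> = (\<integral>x. indicator E x * cnt U L x - indicator E x * (real L * measure M U) \<partial>M)"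
      by (rule Bochner_Integration.integral_diff[OF i1 i2, symmetric])
    finally have e: "(\<integral>x. indicator E x * cnt U L x \<partial>M) - real L * measure M U * measure M E
        = (\<integral>x. indicator E x * cnt U L x - indicator E x * (real L * measure M U) \<partial>M)" .
    have "\<bar>\<integral>x. indicator E x * cnt U L x - indicator E x * (real L * measure M U) \<partial>M\<bar>
        \<le> (\<integral>x. \<bar>cnt U L x - real L * measure M U\<bar> \<partial>M)"
    proof -
      have "\<bar>\<integral>x. indicator E x * cnt U L x - indicator E x * (real L * measure M U) \<partial>M\<bar>
        \<le> (\<integral>x. \<bar>indicator E x * cnt U L x - indicator E x * (real L * measure M U)\<bar> \<partial>M)"
        by (rule integral_abs_bound)
      also have "\<dots> \<le> (\<integral>x. \<bar>cnt U L x - real L * measure M U\<bar> \<partial>M)"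
      proof (rule integral_mono)
        show "integrable M (\<lambda>x. \<bar>indicator E x * cnt U L x - indicator E x * (real L * measure M U)\<bar>)"
          using i1 i2 by auto
        show "integrable M (\<lambda>x. \<bar>cnt U L x - real L * measure M U\<bar>)" by (rule i3)
        fix x show "\<bar>indicator E x * cnt U L x - indicator E x * (real L * measure M U)\<bar> \<le> \<bar>cnt U L x - real L * measure M U\<bar>"
          by (auto simp: indicator_def)
      qed
      finally show ?thesis .
    qed
    then show ?thesis using e int_dev[OF U, of L] by simp
  qed
  have sumX: "\<bar>real L * measure M (U \<inter> E) - (\<Sum>i<L. measure M (W i))\<bar> \<le> real L * (real L * measure M B)"
  proof -
    have "\<bar>real L * measure M (U \<inter> E) - (\<Sum>i<L. measure M (W i))\<bar> = \<bar>\<Sum>i<L. (measure M (U \<inter> E) - measure M (W i))\<bar>"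
      by (simp add: sum_subtractf)
    also have "\<dots> \<le> (\<Sum>i<L. \<bar>measure M (U \<inter> E) - measure M (W i)\<bar>)" by (rule sum_abs)
    also have "\<dots> \<le> (\<Sum>i<L. real L * measure M B)"
    proof (rule sum_mono)
      fix i assume "i \<in> {..<L}"
      then have "real i * measure M B \<le> real L * measure M B" by (intro mult_right_mono) auto
      then show "\<bar>measure M (U \<inter> E) - measure M (W i)\<bar> \<le> real L * measure M B" using XW[of i] by linarith
    qed
    finally show ?thesis by simp
  qed
  have tot: "\<bar>real L * measure M (U \<inter> E) - real L * (measure M U * measure M E)\<bar> \<le> real L * (real L * measure M B + Dv U L)"
    using sumX dev sumW by (simp add: abs_le_iff algebra_simps)
  have "real L * \<bar>measure M (U \<inter> E) - measure M U * measure M E\<bar> \<le> real L * (real L * measure M B + Dv U L)"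
  proof -
    have "\<bar>real L * measure M (U \<inter> E) - real L * (measure M U * measure M E)\<bar> = real L * \<bar>measure M (U \<inter> E) - measure M U * measure M E\<bar>"
      by (simp add: right_diff_distrib[symmetric] abs_mult)
    then show ?thesis using tot by linarith
  qed
  then show ?thesis using L unfolding E_def by simp
qed


lemma Dv_nonneg: "0 \<le> Dv U m" unfolding Dv_def by simp

lemma quant:
  assumes U[measurable]: "U \<in> sets M" and B[measurable]: "B \<in> sets M" and BU: "B \<subseteq> U"
    and pos: "measure M U > 0" and bpos: "measure M B > 0" and t: "t > 0"
    and eps: "0 < \<epsilon>" "\<epsilon> \<le> 1/2" and L: "1 \<le> L"
    and a0: "0 < \<epsilon> * t * measure M U / measure M B - 2"
  shows "\<bar>measure M (Ehat U B (nat \<lfloor>t * measure M U / measure M B\<rfloor>)) - measure M U * measure M (Eset B (nat \<lfloor>t / measure M B\<rfloor>))\<bar>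
    \<le> measure M U * (\<epsilon> * t + 2 * measure M B) + real L * measure M B + Dv U L
      + ((1+\<epsilon>) * t / measure M B + 1) * (Dv U (nat \<lfloor>(1-\<epsilon>) * t / measure M B\<rfloor>) + Dv U (nat \<lceil>(1+\<epsilon>) * t / measure M B\<rceil>))
        / (\<epsilon> * t * measure M U / measure M B - 2)"
proof -
  define c where "c = measure M U"
  define b where "b = measure M B"
  define s where "s = t / b"
  define A0 where "A0 = \<epsilon> * t * c / b - 2"
  define k where "k = nat \<lfloor>t / b\<rfloor>"
  define n where "n = nat \<lfloor>t * c / b\<rfloor>"
  define m1 where "m1 = nat \<lfloor>(1-\<epsilon>) * t / b\<rfloor>"
  define m2 where "m2 = nat \<lceil>(1+\<epsilon>) * t / b\<rceil>"
  have c0: "0 < c" and c1: "c \<le> 1" using pos unfolding c_def by auto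
  have b0: "0 < b" using bpos unfolding b_def by auto
  have s0: "0 < s" unfolding s_def using t b0 by simp
  have sb: "s * b = t" unfolding s_def using b0 by simp
  have A0p: "0 < A0" using a0 unfolding A0_def c_def b_def .
  have A0s: "A0 = \<epsilon> * s * c - 2" unfolding A0_def s_def by simp
  have ts: "t / b = s" "t * c / b = s * c" "(1-\<epsilon>) * t / b = (1-\<epsilon>) * s" "(1+\<epsilon>) * t / b = (1+\<epsilon>) * s"
    unfolding s_def by auto
  have k1: "real k \<le> s" "s - 1 \<le> real k" unfolding k_def ts using nat_floor_bounds[of s] s0 by auto
  have n1: "real n \<le> s * c" "s * c - 1 \<le> real n" unfolding n_def ts using nat_floor_bounds[of "s*c"] s0 c0 by auto
  have m11: "real m1 \<le> (1-\<epsilon>) * s" "(1-\<epsilon>) * s - 1 \<le> real m1" unfolding m1_def ts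
    using nat_floor_bounds[of "(1-\<epsilon>) * s"] s0 eps by auto
  have m21: "(1+\<epsilon>) * s \<le> real m2" "real m2 \<le> (1+\<epsilon>) * s + 1" unfolding m2_def ts
    using nat_ceil_bounds[of "(1+\<epsilon>) * s"] s0 eps by auto
  have es: "0 \<le> \<epsilon> * s" using eps s0 by simp
  have m1k: "m1 \<le> k" unfolding m1_def k_def ts
    by (intro nat_mono floor_mono) (use es in \<open>simp add: algebra_simps\<close>)
  have "real k \<le> real m2" using k1 m21 es by (simp add: algebra_simps)
  then have km2: "k \<le> m2" by simp
  have Dm1: "0 \<le> Dv U m1" and Dm2: "0 \<le> Dv U m2" and DL: "0 \<le> Dv U L" by (rule Dv_nonneg)+
  define Q where "Q = ((1+\<epsilon>) * s + 1) * (Dv U m1 + Dv U m2) / A0"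
  have dev1: "measure M {x\<in>space M. real n < cnt U m1 (T x)} \<le> ((1+\<epsilon>) * s + 1) * Dv U m1 / A0"
  proof -
    have "A0 \<le> real n - 1 - real m1 * c"
    proof -
      have "real m1 * c \<le> (1-\<epsilon>) * s * c" using m11 c0 by (intro mult_right_mono) auto
      then show ?thesis using n1 A0s by (simp add: algebra_simps)
    qed
    then have "measure M {x\<in>space M. real n < cnt U m1 (T x)} \<le> real m1 * Dv U m1 / A0"
      using dev_high[OF U A0p] unfolding c_def by blast
    also have "\<dots> \<le> ((1+\<epsilon>) * s + 1) * Dv U m1 / A0"
      using m11 es A0p Dm1 by (intro divide_right_mono mult_right_mono) (auto simp: algebra_simps)
    finally show ?thesis .
  qed
  have dev2: "measure M {x\<in>space M. cnt U m2 (T x) < real n} \<le> ((1+\<epsilon>) * s + 1) * Dv U m2 / A0"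
  proof -
    have "A0 \<le> real m2 * c - real n - 1"
    proof -
      have "(1+\<epsilon>) * s * c \<le> real m2 * c" using m21 c0 by (intro mult_right_mono) auto
      then show ?thesis using n1 A0s by (simp add: algebra_simps)
    qed
    then have "measure M {x\<in>space M. cnt U m2 (T x) < real n} \<le> real m2 * Dv U m2 / A0"
      using dev_low[OF U A0p] unfolding c_def by blast
    also have "\<dots> \<le> ((1+\<epsilon>) * s + 1) * Dv U m2 / A0"
      using m21 A0p Dm2 by (intro divide_right_mono mult_right_mono) auto
    finally show ?thesis .
  qed
  have Qeq: "((1+\<epsilon>) * s + 1) * Dv U m1 / A0 + ((1+\<epsilon>) * s + 1) * Dv U m2 / A0 = Q"
    unfolding Q_def by (simp add: add_divide_distrib algebra_simps)
  have lip1: "c * measure M (Eset B m1) \<le> c * measure M (Eset B k) + c * (\<epsilon> * t + b)"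
  proof -
    have "measure M (Eset B m1) \<le> measure M (Eset B k) + real (k - m1) * b"
      using lip[OF B m1k] unfolding b_def .
    also have "real (k - m1) * b \<le> (\<epsilon> * s + 1) * b"
      using k1 m11 m1k b0 by (intro mult_right_mono) (auto simp: of_nat_diff algebra_simps)
    finally have "measure M (Eset B m1) \<le> measure M (Eset B k) + (\<epsilon> * t + b)"
      using sb by (simp add: algebra_simps)
    then show ?thesis using c0 by (simp add: distrib_left[symmetric])
  qed
  have lip2: "c * measure M (Eset B k) \<le> c * measure M (Eset B m2) + c * (\<epsilon> * t + 2 * b)"
  proof -
    have "measure M (Eset B k) \<le> measure M (Eset B m2) + real (m2 - k) * b"
      using lip[OF B km2] unfolding b_def .
    also have "real (m2 - k) * b \<le> (\<epsilon> * s + 2) * b"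
      using k1 m21 km2 b0 by (intro mult_right_mono) (auto simp: of_nat_diff algebra_simps)
    finally have "measure M (Eset B k) \<le> measure M (Eset B m2) + (\<epsilon> * t + 2 * b)"
      using sb by (simp add: algebra_simps)
    then show ?thesis using c0 by (simp add: distrib_left[symmetric])
  qed
  have B1: "\<bar>measure M (U \<inter> Eset B m1) - c * measure M (Eset B m1)\<bar> \<le> real L * b + Dv U L"
    using stepB[OF U B L, of m1] unfolding c_def b_def .
  have B2: "\<bar>measure M (U \<inter> Eset B m2) - c * measure M (Eset B m2)\<bar> \<le> real L * b + Dv U L"
    using stepB[OF U B L, of m2] unfolding c_def b_def .
  have A2: "measure M (Ehat U B n) \<le> measure M (U \<inter> Eset B m1) + measure M {x\<in>space M. real n < cnt U m1 (T x)}"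
    by (rule stepA2[OF U B BU pos])
  have A1: "measure M (U \<inter> Eset B m2) \<le> measure M (Ehat U B n) + measure M {x\<in>space M. cnt U m2 (T x) < real n}"
    by (rule stepA1[OF U B BU pos])
  have d1n: "0 \<le> ((1+\<epsilon>) * s + 1) * Dv U m1 / A0" using es eps A0p Dm1 s0 by simp
  have d2n: "0 \<le> ((1+\<epsilon>) * s + 1) * Dv U m2 / A0" using es eps A0p Dm2 s0 by simp
  have "c * (\<epsilon> * t + b) \<le> c * (\<epsilon> * t + 2 * b)" using c0 b0 by simp
  then have "\<bar>measure M (Ehat U B n) - c * measure M (Eset B k)\<bar> \<le> c * (\<epsilon> * t + 2 * b) + real L * b + Dv U L + Q"
    using A1 A2 d1n d2n abs_le_D1[OF B1] abs_le_D2[OF B1] abs_le_D1[OF B2] abs_le_D2[OF B2] lip1 lip2 dev1 dev2 Qeq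
    by (intro abs_leI) linarith+
  then show ?thesis unfolding c_def b_def Q_def A0_def n_def k_def m1_def m2_def s_def
    by (simp add: mult.assoc)
qed


lemma main_lim:
  assumes U[measurable]: "U \<in> sets M" and pos: "measure M U > 0"
    and Bm: "\<And>j. B j \<in> sets M" and BU: "\<And>j. B j \<subseteq> U" and bpos: "\<And>j. measure M (B j) > 0"
    and b0: "(\<lambda>j. measure M (B j)) \<longlonglongrightarrow> 0" and t: "t > 0"
  shows "(\<lambda>j. \<bar>measure M (Ehat U (B j) (nat \<lfloor>t * measure M U / measure M (B j)\<rfloor>))
             - measure M U * measure M (Eset (B j) (nat \<lfloor>t / measure M (B j)\<rfloor>))\<bar>) \<longlonglongrightarrow> 0"
proof (rule LIMSEQ_I)
  fix r :: real assume r: "0 < r"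
  define c where "c = measure M U"
  have c0: "0 < c" using pos unfolding c_def .
  define \<epsilon> where "\<epsilon> = min (1/2) (r / (4 * c * t))"
  have e0: "0 < \<epsilon>" "\<epsilon> \<le> 1/2" unfolding \<epsilon>_def using r c0 t by auto
  have ect: "c * \<epsilon> * t \<le> r / 4"
  proof -
    have "\<epsilon> \<le> r / (4 * c * t)" unfolding \<epsilon>_def by simp
    then have "c * t * \<epsilon> \<le> c * t * (r / (4 * c * t))" using c0 t by (intro mult_left_mono) auto
    also have "\<dots> = r / 4" using c0 t by (simp add: field_simps)
    finally show ?thesis by (simp add: algebra_simps)
  qed
  have DL: "(\<lambda>L. Dv U L) \<longlonglongrightarrow> 0" using L1_conv[OF U] unfolding Dv_def .
  obtain L0 where L0: "\<And>L. L \<ge> L0 \<Longrightarrow> norm (Dv U L - 0) < r / 4" using LIMSEQ_D[OF DL, of "r/4"] r by auto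
  define L where "L = max 1 L0"
  have L1: "1 \<le> L" unfolding L_def by simp
  have DLr: "Dv U L < r / 4" using L0[of L] Dv_nonneg[of U L] unfolding L_def by simp
  define \<delta> where "\<delta> = r * \<epsilon> * c / 48"
  have d0: "0 < \<delta>" unfolding \<delta>_def using r e0 c0 by simp
  obtain M0 where M0: "\<And>m. m \<ge> M0 \<Longrightarrow> norm (Dv U m - 0) < \<delta>" using LIMSEQ_D[OF DL d0] by auto
  define \<beta> where "\<beta> = min (min (\<epsilon> * t * c / 4) t) (min (r / (4 * (2 * c + real L + 1))) (t / (2 * (real M0 + 1))))"
  have beta0: "0 < \<beta>" unfolding \<beta>_def using e0 t c0 r by auto
  from order_tendstoD(2)[OF b0 beta0] obtain j0 where j0: "\<And>j. j \<ge> j0 \<Longrightarrow> measure M (B j) < \<beta>"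
    unfolding eventually_sequentially by auto
  show "\<exists>no. \<forall>j\<ge>no. norm (\<bar>measure M (Ehat U (B j) (nat \<lfloor>t * measure M U / measure M (B j)\<rfloor>))
             - measure M U * measure M (Eset (B j) (nat \<lfloor>t / measure M (B j)\<rfloor>))\<bar> - 0) < r"
  proof (intro exI[of _ j0] allI impI)
    fix j assume jj: "j0 \<le> j"
    define b where "b = measure M (B j)"
    have bp: "0 < b" using bpos unfolding b_def .
    have bb: "b < \<beta>" using j0[OF jj] unfolding b_def .
    have bb1: "b < \<epsilon> * t * c / 4" "b < t" "b < r / (4 * (2 * c + real L + 1))" "b < t / (2 * (real M0 + 1))"
      using bb unfolding \<beta>_def by auto
    define x where "x = t / b"
    have x0: "0 < x" unfolding x_def using t bp by simp
    have xb: "x * b = t" unfolding x_def using bp by simp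
    have x1: "1 \<le> x" unfolding x_def using bb1(2) bp by simp
    have ecx: "4 \<le> \<epsilon> * c * x"
    proof -
      have "4 * b \<le> \<epsilon> * t * c" using bb1(1) by simp
      then have "4 \<le> \<epsilon> * t * c / b" using bp by (simp add: le_divide_eq)
      then show ?thesis unfolding x_def by (simp add: algebra_simps)
    qed
    have xM: "real M0 + 1 \<le> x / 2"
    proof -
      have "b * (2 * (real M0 + 1)) < t" using bb1(4) by (simp add: less_divide_eq)
      then have "2 * (real M0 + 1) < x" unfolding x_def using bp by (simp add: less_divide_eq algebra_simps)
      then show ?thesis by simp
    qed
    define m1 where "m1 = nat \<lfloor>(1-\<epsilon>) * t / b\<rfloor>"
    define m2 where "m2 = nat \<lceil>(1+\<epsilon>) * t / b\<rceil>"
    have tb: "(1-\<epsilon>) * t / b = (1-\<epsilon>) * x" "(1+\<epsilon>) * t / b = (1+\<epsilon>) * x" "\<epsilon> * t * c / b = \<epsilon> * c * x"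
      unfolding x_def by auto
    have m1M: "M0 \<le> m1"
    proof -
      have "(1-\<epsilon>) * x - 1 \<le> real m1" unfolding m1_def tb using nat_floor_bounds[of "(1-\<epsilon>) * x"] e0 x0 by auto
      moreover have "x / 2 \<le> (1-\<epsilon>) * x"
      proof -
        have "\<epsilon> * x \<le> (1/2) * x" using e0 x0 by (intro mult_right_mono) auto
        then show ?thesis by (simp add: algebra_simps)
      qed
      ultimately have "real M0 \<le> real m1" using xM by linarith
      then show ?thesis by simp
    qed
    have m2M: "M0 \<le> m2"
    proof -
      have "(1+\<epsilon>) * x \<le> real m2" unfolding m2_def tb using nat_ceil_bounds[of "(1+\<epsilon>) * x"] e0 x0 by auto
      moreover have "x / 2 \<le> (1+\<epsilon>) * x" using e0 x0 by (simp add: algebra_simps)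
      ultimately have "real M0 \<le> real m2" using xM by linarith
      then show ?thesis by simp
    qed
    have D1: "Dv U m1 < \<delta>" using M0[OF m1M] Dv_nonneg[of U m1] by simp
    have D2: "Dv U m2 < \<delta>" using M0[OF m2M] Dv_nonneg[of U m2] by simp
    have a0: "0 < \<epsilon> * t * measure M U / measure M (B j) - 2" using ecx tb unfolding c_def b_def by simp
    have Q: "\<bar>measure M (Ehat U (B j) (nat \<lfloor>t * measure M U / measure M (B j)\<rfloor>)) - measure M U * measure M (Eset (B j) (nat \<lfloor>t / measure M (B j)\<rfloor>))\<bar>
      \<le> measure M U * (\<epsilon> * t + 2 * measure M (B j)) + real L * measure M (B j) + Dv U L
      + ((1+\<epsilon>) * t / measure M (B j) + 1) * (Dv U (nat \<lfloor>(1-\<epsilon>) * t / measure M (B j)\<rfloor>) + Dv U (nat \<lceil>(1+\<epsilon>) * t / measure M (B j)\<rceil>))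
        / (\<epsilon> * t * measure M U / measure M (B j) - 2)"
      by (rule quant[OF U Bm BU pos bpos t e0 L1 a0])
    have T3: "((1+\<epsilon>) * x + 1) * (Dv U m1 + Dv U m2) / (\<epsilon> * c * x - 2) \<le> r / 4"
    proof -
      have "((1+\<epsilon>) * x + 1) * (Dv U m1 + Dv U m2) / (\<epsilon> * c * x - 2) \<le> (3 * x) * (2 * \<delta>) / (\<epsilon> * c * x / 2)"
      proof (rule frac_le)
        show "0 \<le> 3 * x * (2 * \<delta>)" using x0 d0 by simp
        have "\<epsilon> * x \<le> (1/2) * x" using e0 x1 by (intro mult_right_mono) auto
        moreover have "(1+\<epsilon>) * x = x + \<epsilon> * x" by (simp add: algebra_simps)
        ultimately have "(1+\<epsilon>) * x + 1 \<le> 3 * x" using x1 by linarith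
        moreover have "Dv U m1 + Dv U m2 \<le> 2 * \<delta>" using D1 D2 by simp
        ultimately show "((1+\<epsilon>) * x + 1) * (Dv U m1 + Dv U m2) \<le> 3 * x * (2 * \<delta>)"
          using Dv_nonneg[of U m1] Dv_nonneg[of U m2] x0 e0 by (intro mult_mono) auto
        show "0 < \<epsilon> * c * x / 2" using e0 c0 x0 by simp
        show "\<epsilon> * c * x / 2 \<le> \<epsilon> * c * x - 2" using ecx by simp
      qed
      also have "\<dots> = r / 4" unfolding \<delta>_def using e0 c0 x0 by (simp add: field_simps)
      finally show ?thesis .
    qed
    have T2: "c * (2 * b) + real L * b < r / 4"
    proof -
      have "b * (4 * (2 * c + real L + 1)) < r" using bb1(3) c0 by (simp add: less_divide_eq)
      then show ?thesis using bp by (simp add: algebra_simps)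
    qed
    have "measure M U * (\<epsilon> * t + 2 * measure M (B j)) + real L * measure M (B j) + Dv U L
      + ((1+\<epsilon>) * t / measure M (B j) + 1) * (Dv U (nat \<lfloor>(1-\<epsilon>) * t / measure M (B j)\<rfloor>) + Dv U (nat \<lceil>(1+\<epsilon>) * t / measure M (B j)\<rceil>))
        / (\<epsilon> * t * measure M U / measure M (B j) - 2)
      = c * \<epsilon> * t + (c * (2 * b) + real L * b) + Dv U L + ((1+\<epsilon>) * x + 1) * (Dv U m1 + Dv U m2) / (\<epsilon> * c * x - 2)"
      unfolding c_def[symmetric] b_def[symmetric] m1_def m2_def tb by (simp add: algebra_simps)
    also have "\<dots> < r" using ect T2 DLr T3 by linarith
    finally show "norm (\<bar>measure M (Ehat U (B j) (nat \<lfloor>t * measure M U / measure M (B j)\<rfloor>))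
             - measure M U * measure M (Eset (B j) (nat \<lfloor>t / measure M (B j)\<rfloor>))\<bar> - 0) < r"
      using Q by simp
  qed
qed


lemma entry_dist_eq:
  assumes B[measurable]: "B \<in> sets M" and bpos: "measure M B > 0" and t: "t > 0"
  shows "entry_dist M T B t = measure M (Eset B (nat \<lfloor>t / measure M B\<rfloor>))"
proof -
  have s: "0 \<le> t / measure M B" using t bpos by simp
  show ?thesis unfolding entry_dist_def Eset_def using et_gt[OF s, of T B] by simp
qed

lemma induced_dist_eq:
  assumes U[measurable]: "U \<in> sets M" and B[measurable]: "B \<in> sets M" and pos: "measure M U > 0"
    and bpos: "measure M B > 0" and t: "t > 0"
  shows "induced_entry_dist M T U B t = measure M (Ehat U B (nat \<lfloor>t * measure M U / measure M B\<rfloor>)) / measure M U"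
proof -
  have e: "t / induced_measure M U B = t * measure M U / measure M B"
    unfolding induced_measure_def using pos bpos by simp
  have s: "0 \<le> t * measure M U / measure M B" using t bpos pos by simp
  show ?thesis unfolding induced_entry_dist_def e unfolding induced_measure_def Ehat_def
    using et_gt[OF s, of "induced_map T U" B] by simp
qed

end

theorem theorem1:
  fixes M :: "'a measure" and T :: "'a \<Rightarrow> 'a" and U :: "'a set" and B :: "nat \<Rightarrow> 'a set"
  assumes "prob_space M"
    and "mpreserving M T"
    and "ergodic_map M T"
    and "U \<in> sets M" and "measure M U > 0"
    and "\<And>j. B j \<in> sets M" and "\<And>j. B j \<subseteq> U" and "\<And>j. measure M (B j) > 0"
    and "(\<lambda>j. measure M (B j)) \<longlonglongrightarrow> 0"
    and "(\<forall>t>0. convergent (\<lambda>j. entry_dist M T (B j) t))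
         \<or> (\<forall>t>0. convergent (\<lambda>j. induced_entry_dist M T U (B j) t))"
  shows "(\<forall>t>0. convergent (\<lambda>j. entry_dist M T (B j) t))
       \<and> (\<forall>t>0. convergent (\<lambda>j. induced_entry_dist M T U (B j) t))
       \<and> (\<forall>t>0. lim (\<lambda>j. entry_dist M T (B j) t) = lim (\<lambda>j. induced_entry_dist M T U (B j) t))"
proof -
  interpret erg M T using assms(1-3) by (simp add: erg_def erg_axioms_def)
  have P: "convergent (\<lambda>j. entry_dist M T (B j) t) \<and> convergent (\<lambda>j. induced_entry_dist M T U (B j) t)
      \<and> lim (\<lambda>j. entry_dist M T (B j) t) = lim (\<lambda>j. induced_entry_dist M T U (B j) t)" if t: "t > 0" for t
  proof (rule conv_pair)
    define c where "c = measure M U"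
    have c0: "0 < c" using assms(5) unfolding c_def .
    have ml: "(\<lambda>j. \<bar>measure M (Ehat U (B j) (nat \<lfloor>t * measure M U / measure M (B j)\<rfloor>))
             - measure M U * measure M (Eset (B j) (nat \<lfloor>t / measure M (B j)\<rfloor>))\<bar>) \<longlonglongrightarrow> 0"
      by (rule main_lim[OF assms(4,5,6,7,8,9) t])
    have "(\<lambda>j. \<bar>measure M (Ehat U (B j) (nat \<lfloor>t * measure M U / measure M (B j)\<rfloor>))
             - measure M U * measure M (Eset (B j) (nat \<lfloor>t / measure M (B j)\<rfloor>))\<bar> / c) \<longlonglongrightarrow> 0 / c"
      by (intro tendsto_divide ml tendsto_const) (use c0 in auto)
    moreover have "\<bar>induced_entry_dist M T U (B j) t - entry_dist M T (B j) t\<bar> =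
        \<bar>measure M (Ehat U (B j) (nat \<lfloor>t * measure M U / measure M (B j)\<rfloor>))
             - measure M U * measure M (Eset (B j) (nat \<lfloor>t / measure M (B j)\<rfloor>))\<bar> / c" for j
    proof -
      have "induced_entry_dist M T U (B j) t - entry_dist M T (B j) t =
        (measure M (Ehat U (B j) (nat \<lfloor>t * measure M U / measure M (B j)\<rfloor>))
             - measure M U * measure M (Eset (B j) (nat \<lfloor>t / measure M (B j)\<rfloor>))) / c"
        unfolding induced_dist_eq[OF assms(4,6,5,8) t] entry_dist_eq[OF assms(6,8) t] c_def
        using c0 unfolding c_def by (simp add: field_simps)
      then show ?thesis using c0 by simp
    qed
    ultimately have "(\<lambda>j. \<bar>induced_entry_dist M T U (B j) t - entry_dist M T (B j) t\<bar>) \<longlonglongrightarrow> 0" by simp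
    then show "(\<lambda>j. induced_entry_dist M T U (B j) t - entry_dist M T (B j) t) \<longlonglongrightarrow> 0"
      by (simp add: tendsto_rabs_zero_iff)
    show "convergent (\<lambda>j. entry_dist M T (B j) t) \<or> convergent (\<lambda>j. induced_entry_dist M T U (B j) t)"
      using assms(10) t by blast
  qed
  then show ?thesis by blast
qed

end
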